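(* Let $s\ge2$ and $1=a_1\le a_2\le\dots\le a_s$ with at least one of $a_2,\dots,a_s$ greater than $1$. Define $c_i=1-a_i^{-1}$ for $2\le i\le s$, $M_j=\tfrac12(c_2^j+\dots+c_s^j)$ for $j\ge1$, $$p_0=\prod_{i=2}^s a_i^{-1/2},\qquad p_j=\frac1j\sum_{i=0}^{j-1}M_{j-i}\,p_i\ \ (j\ge1),$$ and $W_i=\sum_{j=0}^i p_j$. Then all $p_j>0$ and, for every $i\ge1$, $$\frac{(i+1)p_{i+1}}{i\,p_i}\le\frac{W_i}{W_{i-1}}.$$ *)

theory Defs
  imports Complex_Main
begin

definition cc :: "(nat \<Rightarrow> real) \<Rightarrow> nat \<Rightarrow> real" where
  "cc a i = 1 - 1 / a i"

definition MM :: "(nat \<Rightarrow> real) \<Rightarrow> nat \<Rightarrow> nat \<Rightarrow> real" where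
  "MM a s j = (1/2) * (\<Sum>i=2..s. (cc a i) ^ j)"

definition p0 :: "(nat \<Rightarrow> real) \<Rightarrow> nat \<Rightarrow> real" where
  "p0 a s = (\<Prod>i=2..s. a i powr (-1/2))"

fun plist :: "(nat \<Rightarrow> real) \<Rightarrow> nat \<Rightarrow> nat \<Rightarrow> real list" where
  "plist a s 0 = [p0 a s]"
| "plist a s (Suc j) = plist a s j @
     [(1 / real (Suc j)) * (\<Sum>i<Suc j. MM a s (Suc j - i) * (plist a s j ! i))]"

definition pp :: "(nat \<Rightarrow> real) \<Rightarrow> nat \<Rightarrow> nat \<Rightarrow> real" where
  "pp a s j = plist a s j ! j"

definition WW :: "(nat \<Rightarrow> real) \<Rightarrow> nat \<Rightarrow> nat \<Rightarrow> real" where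
  "WW a s i = (\<Sum>j\<le>i. pp a s j)"

end

theory Submission
  imports Defs
begin

lemma abel:
  fixes f p W :: "nat \<Rightarrow> real"
  assumes W: "\<And>j. W j = (\<Sum>l\<le>j. p l)"
  shows "(\<Sum>j<Suc n. f j * p j) = f n * W n - (\<Sum>j<n. (f (Suc j) - f j) * W j)"
proof (induction n)
  case 0 thus ?case by (simp add: W)
next
  case (Suc n)
  have e: "W (Suc n) * f (Suc n) = W n * f (Suc n) + p (Suc n) * f (Suc n)"
    by (simp add: W algebra_simps)
  show ?case using Suc e by (simp add: algebra_simps)
qed

lemma abstract_step:
  fixes p M W :: "nat \<Rightarrow> real"
  assumes pos: "\<And>j. p j > 0" and mono: "\<And>k. M (Suc k) \<le> M k"
    and rec: "\<And>j. real (Suc j) * p (Suc j) = (\<Sum>i<Suc j. M (Suc j - i) * p i)"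
    and W: "\<And>j. W j = (\<Sum>l\<le>j. p l)"
    and IH: "\<And>k. k < n \<Longrightarrow> real (Suc (Suc k)) * p (Suc (Suc k)) / W (Suc k)
               \<le> real (Suc k) * p (Suc k) / W k"
  shows "real (Suc (Suc n)) * p (Suc (Suc n)) / W (Suc n) \<le> real (Suc n) * p (Suc n) / W n"
proof -
  have Wpos: "W j > 0" for j unfolding W by (rule sum_pos) (auto intro: pos)
  have Wsuc: "W (Suc j) = W j + p (Suc j)" for j by (simp add: W)
  define D where "D n = (\<Sum>j<n. (M (n - j) - M (Suc n - j)) * W j)" for n
  have rep: "real (Suc m) * p (Suc m) = M 1 * W m - D m" for m
  proof -
    have "(\<Sum>j<Suc m. (\<lambda>j. M (Suc m - j)) j * p j) = (\<lambda>j. M (Suc m - j)) m * W m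
        - (\<Sum>j<m. ((\<lambda>j. M (Suc m - j)) (Suc j) - (\<lambda>j. M (Suc m - j)) j) * W j)"
      by (rule abel[OF W])
    then show ?thesis using rec[of m] by (simp add: D_def)
  qed
  have ratio: "W (Suc (Suc k)) * W k \<le> W (Suc k) * W (Suc k)" if "k < n" for k
  proof -
    have h: "real (Suc (Suc k)) * p (Suc (Suc k)) / W (Suc k) \<le> real (Suc k) * p (Suc k) / W k"
      using IH that by blast
    define A where "A = W k"
    define B where "B = W (Suc k)"
    define C where "C = W (Suc (Suc k))"
    have A: "A > 0" and B: "B > 0" and C: "C > 0" using Wpos by (auto simp: A_def B_def C_def)
    have pB: "p (Suc k) = B - A" and pC: "p (Suc (Suc k)) = C - B" using Wsuc
      by (auto simp: A_def B_def C_def)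
    have BA: "B \<ge> A" using pB pos[of "Suc k"] by simp
    define x where "x = (C - B) / B"
    define y where "y = (B - A) / A"
    have y0: "y \<ge> 0" using BA A by (simp add: y_def)
    have "real (Suc (Suc k)) * x \<le> real (Suc k) * y"
      using h by (simp add: x_def y_def pB pC A_def[symmetric] B_def[symmetric])
    also have "\<dots> \<le> real (Suc (Suc k)) * y" using y0 by (intro mult_right_mono) auto
    finally have "x \<le> y" by simp
    then have "C / B \<le> B / A" using A B by (simp add: x_def y_def diff_divide_distrib)
    then show ?thesis using A B by (simp add: field_simps A_def B_def C_def)
  qed
  have logc: "m \<le> n \<longrightarrow> (\<forall>j\<le>m. W j * W (Suc m) \<le> W (Suc j) * W m)" for m
  proof (induction m)
    case 0 then show ?case by simp
  next
    case (Suc m)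
    show ?case
    proof (intro impI allI)
      fix j assume mn: "Suc m \<le> n" and j: "j \<le> Suc m"
      show "W j * W (Suc (Suc m)) \<le> W (Suc j) * W (Suc m)"
      proof (cases "j = Suc m")
        case True then show ?thesis by (simp add: mult.commute)
      next
        case False
        then have jm: "j \<le> m" using j by simp
        have i1: "W j * W (Suc m) \<le> W (Suc j) * W m" using Suc.IH mn jm by simp
        have r: "W (Suc (Suc m)) * W m \<le> W (Suc m) * W (Suc m)" using ratio mn by simp
        have "(W j * W (Suc (Suc m))) * W m = W j * (W (Suc (Suc m)) * W m)" by simp
        also have "\<dots> \<le> W j * (W (Suc m) * W (Suc m))"
          using r Wpos[of j] by (intro mult_left_mono) auto
        also have "\<dots> = (W j * W (Suc m)) * W (Suc m)" by simp
        also have "\<dots> \<le> (W (Suc j) * W m) * W (Suc m)"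
          using i1 Wpos[of "Suc m"] by (intro mult_right_mono) auto
        also have "\<dots> = (W (Suc j) * W (Suc m)) * W m" by simp
        finally show ?thesis using Wpos[of m] by simp
      qed
    qed
  qed
  have e0: "M (n - j) - M (Suc n - j) \<ge> 0" if "j < n" for j
    using mono[of "n - j"] that by (simp add: Suc_diff_le)
  have DS: "D (Suc n) = (M (Suc n) - M (Suc (Suc n))) * W 0
      + (\<Sum>j<n. (M (n - j) - M (Suc n - j)) * W (Suc j))"
    unfolding D_def sum.lessThan_Suc_shift by simp
  have "D n * W (Suc n) = (\<Sum>j<n. (M (n - j) - M (Suc n - j)) * (W j * W (Suc n)))"
    unfolding D_def by (simp add: sum_distrib_right mult.assoc)
  also have "\<dots> \<le> (\<Sum>j<n. (M (n - j) - M (Suc n - j)) * (W (Suc j) * W n))"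
    using logc[of n] e0 by (intro sum_mono mult_left_mono) auto
  also have "\<dots> = (\<Sum>j<n. (M (n - j) - M (Suc n - j)) * W (Suc j)) * W n"
    by (simp add: sum_distrib_right mult.assoc)
  also have "\<dots> \<le> D (Suc n) * W n"
  proof -
    have "(M (Suc n) - M (Suc (Suc n))) * W 0 \<ge> 0"
      using mono[of "Suc n"] Wpos[of 0] by simp
    then show ?thesis unfolding DS using Wpos[of n] by (intro mult_right_mono) auto
  qed
  finally have cmp: "D n * W (Suc n) \<le> D (Suc n) * W n" .
  have "D n / W n \<le> D (Suc n) / W (Suc n)"
    using cmp Wpos[of n] Wpos[of "Suc n"] by (simp add: field_simps)
  moreover have "real (Suc (Suc n)) * p (Suc (Suc n)) / W (Suc n) = M 1 - D (Suc n) / W (Suc n)"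
    using rep[of "Suc n"] Wpos[of "Suc n"] by (simp add: field_simps)
  moreover have "real (Suc n) * p (Suc n) / W n = M 1 - D n / W n"
    using rep[of n] Wpos[of n] by (simp add: field_simps)
  ultimately show ?thesis by linarith
qed

lemma abstract_main:
  fixes p M W :: "nat \<Rightarrow> real"
  assumes pos: "\<And>j. p j > 0" and mono: "\<And>k. M (Suc k) \<le> M k"
    and rec: "\<And>j. real (Suc j) * p (Suc j) = (\<Sum>i<Suc j. M (Suc j - i) * p i)"
    and W: "\<And>j. W j = (\<Sum>l\<le>j. p l)"
  shows "real (Suc (Suc n)) * p (Suc (Suc n)) / W (Suc n) \<le> real (Suc n) * p (Suc n) / W n"
proof (induction n rule: less_induct)
  case (less n)
  show ?case by (rule abstract_step[OF pos mono rec W]) (use less in auto)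
qed

lemma frac_helper: fixes A X B Y :: real assumes X: "X > 0" and Y: "Y > 0" and le: "A * Y \<le> B * X"
  shows "A / X \<le> B / Y"
proof -
  have "A \<le> (B * X) / Y" using le Y by (simp add: pos_le_divide_eq)
  also have "\<dots> = B / Y * X" by simp
  finally show ?thesis using X by (subst pos_divide_le_eq[OF X])
qed

lemma plist_len: "length (plist a s j) = Suc j"
  by (induction j) auto

lemma plist_nth: "i \<le> j \<Longrightarrow> plist a s j ! i = pp a s i"
proof (induction j)
  case 0 then show ?case by (simp add: pp_def)
next
  case (Suc j)
  show ?case
  proof (cases "i = Suc j")
    case True then show ?thesis by (simp add: pp_def)
  next
    case False
    then have "i < Suc j" using Suc.prems by simp
    then show ?thesis using Suc.IH by (simp add: nth_append plist_len)
  qed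
qed

lemma pp_rec: "real (Suc j) * pp a s (Suc j) = (\<Sum>i<Suc j. MM a s (Suc j - i) * pp a s i)"
proof -
  have "pp a s (Suc j) = (1 / real (Suc j)) * (\<Sum>i<Suc j. MM a s (Suc j - i) * (plist a s j ! i))"
    unfolding pp_def by (simp add: nth_append plist_len)
  also have "(\<Sum>i<Suc j. MM a s (Suc j - i) * (plist a s j ! i)) = (\<Sum>i<Suc j. MM a s (Suc j - i) * pp a s i)"
    by (intro sum.cong) (auto simp: plist_nth)
  finally show ?thesis by simp
qed

theorem mainTheorem10:
  fixes a :: "nat \<Rightarrow> real" and s :: nat
  assumes "s \<ge> 2"
    and "a 1 = 1"
    and "\<And>i. 1 \<le> i \<Longrightarrow> i < s \<Longrightarrow> a i \<le> a (Suc i)"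
    and "\<exists>i\<in>{2..s}. a i > 1"
  shows "(\<forall>j. pp a s j > 0) \<and>
         (\<forall>i\<ge>1. real (i + 1) * pp a s (i + 1) / (real i * pp a s i)
                    \<le> WW a s i / WW a s (i - 1))"
proof -
  have age: "i \<le> s \<longrightarrow> a i \<ge> 1" if "i \<ge> 1" for i
    using that
  proof (induction i rule: dec_induct)
    case base then show ?case using assms(2) by simp
  next
    case (step m)
    then show ?case using assms(3)[of m] by auto
  qed
  have c01: "0 \<le> cc a i \<and> cc a i < 1" if "i \<in> {2..s}" for i
  proof -
    have "a i \<ge> 1" using age[of i] that by auto
    then show ?thesis by (simp add: cc_def)
  qed
  have Mmono: "MM a s (Suc k) \<le> MM a s k" for k
  proof -
    have "(\<Sum>i=2..s. cc a i ^ Suc k) \<le> (\<Sum>i=2..s. cc a i ^ k)"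
    proof (intro sum_mono)
      fix i assume "i \<in> {2..s}"
      then have "0 \<le> cc a i" "cc a i \<le> 1" using c01[of i] by auto
      then show "cc a i ^ Suc k \<le> cc a i ^ k"
        by (simp add: mult_left_le_one_le)
    qed
    then show ?thesis by (simp add: MM_def)
  qed
  obtain i0 where i0: "i0 \<in> {2..s}" "a i0 > 1" using assms(4) by blast
  have Mpos: "MM a s k > 0" for k
  proof -
    have "cc a i0 > 0" using i0 by (simp add: cc_def)
    then have "cc a i0 ^ k > 0" by simp
    also have "cc a i0 ^ k \<le> (\<Sum>i=2..s. cc a i ^ k)"
      using i0(1) c01 by (intro member_le_sum) auto
    finally show ?thesis by (simp add: MM_def)
  qed
  have p0pos: "p0 a s > 0"
    unfolding p0_def
  proof (rule prod_pos)
    fix i assume "i \<in> {2..s}"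
    then have "a i \<ge> 1" using age[of i] by auto
    then show "0 < a i powr (-1/2)" by simp
  qed
  have ppos: "pp a s j > 0" for j
  proof (induction j rule: less_induct)
    case (less j)
    show ?case
    proof (cases j)
      case 0 then show ?thesis using p0pos by (simp add: pp_def)
    next
      case (Suc m)
      have "(\<Sum>i<Suc m. MM a s (Suc m - i) * pp a s i) > 0"
        using less Suc Mpos by (intro sum_pos) auto
      then have "real (Suc m) * pp a s (Suc m) > 0" using pp_rec[of m a s] by simp
      then show ?thesis using Suc by (simp add: zero_less_mult_iff)
    qed
  qed
  have main: "real (Suc (Suc n)) * pp a s (Suc (Suc n)) / WW a s (Suc n)
      \<le> real (Suc n) * pp a s (Suc n) / WW a s n" for n
    by (rule abstract_main[where M="MM a s", OF ppos Mmono pp_rec]) (simp add: WW_def)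
  have Wpos: "WW a s j > 0" for j unfolding WW_def by (rule sum_pos) (auto intro: ppos)
  show ?thesis
  proof (intro conjI allI impI)
    fix j show "pp a s j > 0" by (rule ppos)
  next
    fix i :: nat assume "i \<ge> 1"
    then obtain n where i: "i = Suc n" by (cases i) auto
    have h: "real (Suc (Suc n)) * pp a s (Suc (Suc n)) / WW a s (Suc n)
      \<le> real (Suc n) * pp a s (Suc n) / WW a s n" by (rule main)
    have pa: "pp a s (Suc n) > 0" and pb: "pp a s (Suc (Suc n)) > 0" by (rule ppos)+
    have wa: "WW a s n > 0" and wb: "WW a s (Suc n) > 0" by (rule Wpos)+
    have cross: "real (Suc (Suc n)) * pp a s (Suc (Suc n)) * WW a s n
        \<le> real (Suc n) * pp a s (Suc n) * WW a s (Suc n)"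
      using h wa wb by (simp add: field_simps)
    show "real (i + 1) * pp a s (i + 1) / (real i * pp a s i) \<le> WW a s i / WW a s (i - 1)"
      unfolding i
    proof -
      define A where "A = real (Suc (Suc n)) * pp a s (Suc (Suc n))"
      define X where "X = real (Suc n) * pp a s (Suc n)"
      have X: "X > 0" using pa by (simp add: X_def)
      have le: "A * WW a s n \<le> WW a s (Suc n) * X" using cross
        unfolding A_def X_def by (metis mult.commute)
      have "A / X \<le> WW a s (Suc n) / WW a s n" by (rule frac_helper[OF X wa le])
      then show "real (Suc n + 1) * pp a s (Suc n + 1) / (real (Suc n) * pp a s (Suc n))
          \<le> WW a s (Suc n) / WW a s (Suc n - 1)" by (simp add: A_def X_def)
    qed
  qed
qed

end
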